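(* Let $\Sigma\subseteq\mathbb{C}$ be a nonempty compact set, $L$ a bounded band operator on $\ell^2(\mathbb{Z})$ with $LS=SL$, $\gamma\in\mathbb{Z}$, and for $u\in\Sigma^{\mathbb{Z}}$ let $H(u):=L+S^\gamma M_u$, with band-width $w$. Let $b\in\Sigma^{\mathbb{Z}}$ with $\mathcal{W}(b)=\mathcal{W}(b|_{\mathbb{N}})$. Then for all $\lambda\in\mathbb{C}$, \[ \|(H(b)^+-\lambda)^{-1}\|\ge\|(H(b)-\lambda)^{-1}\|,\qquad\text{so that}\qquad \sigma(H(b)^+)\supseteq\sigma(H(b)), \] and, with $T=H(b)-\lambda$, for all $N\in\mathbb{N}$, \[ \nu_N(T^+)=\min\Big\{\min_{j=1}^{w}\nu_{j..j+N-1}(T^+),\ \nu_N(T)\Big\}. \]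
   Context: $\mathbb{N}=\{1,2,\dots\}$, $(Sx)_n=x_{n-1}$, $(M_ux)_n=u_nx_n$; a band operator on $\ell^2(\mathbb{Z})$ is a bounded matrix operator with $A_{ij}=0$ for $|i-j|>w$ (the band-width). $\mathcal{W}(u)$ is the set of all finite subwords (blocks of consecutive entries) of a sequence $u$; $b|_{\mathbb{N}}$ is the restriction of $b$ to $\mathbb{N}$. For an operator $A$ on $\ell^2(\mathbb{Z})$, $A^+$ is its compression to $\ell^2(\mathbb{N})$ (matrix $(A_{ij})_{i,j\in\mathbb{N}}$). $\nu_N(T):=\inf\{\|Tx\|:\|x\|=1,\operatorname{diam}(\operatorname{supp}x)<N\}$; for $l,r\in\mathbb{N}$, $\nu_{l..r}(T^+)$ is the smallest singular value of the submatrix $(T^+_{ij})_{i\in1..r+w,\,j\in l..r}$. $\|B^{-1}\|:=\infty$ if $B$ is not invertible. *)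

theory Defs
  imports "HOL-Analysis.Analysis"
begin

text \<open>Operators on l2(Z) and on
  l2(N) (N = {1,2,...}) are both represented by int-indexed matrices acting on
  square-summable sequences supported in a carrier set I (I = UNIV for l2(Z),
  I = {1..} for l2(N)). The compression A^+ of A is A acting on carrier {1..}.\<close>

type_synonym imat = "int \<Rightarrow> int \<Rightarrow> complex"
type_synonym iseq = "int \<Rightarrow> complex"

definition l2 :: "int set \<Rightarrow> iseq set" where
  "l2 I = {x. (\<forall>i. i \<notin> I \<longrightarrow> x i = 0) \<and> (\<lambda>i. (cmod (x i))\<^sup>2) summable_on UNIV}"

definition l2norm :: "iseq \<Rightarrow> real" where
  "l2norm x = sqrt (\<Sum>\<^sub>\<infinity>i. (cmod (x i))\<^sup>2)"

definition mapply :: "imat \<Rightarrow> int set \<Rightarrow> iseq \<Rightarrow> iseq" where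
  "mapply A I x = (\<lambda>i. if i \<in> I then (\<Sum>\<^sub>\<infinity>j\<in>I. A i j * x j) else 0)"

definition mmult :: "imat \<Rightarrow> imat \<Rightarrow> imat" where
  "mmult A B = (\<lambda>i j. \<Sum>\<^sub>\<infinity>k. A i k * B k j)"

definition madd :: "imat \<Rightarrow> imat \<Rightarrow> imat" where
  "madd A B = (\<lambda>i j. A i j + B i j)"

definition mshift :: "imat \<Rightarrow> complex \<Rightarrow> imat" where
  "mshift A z = (\<lambda>i j. A i j - (if i = j then z else 0))"

definition band_width :: "nat \<Rightarrow> imat \<Rightarrow> bool" where
  "band_width w A \<longleftrightarrow> (\<forall>i j. \<bar>i - j\<bar> > int w \<longrightarrow> A i j = 0)"

definition bounded_op :: "imat \<Rightarrow> int set \<Rightarrow> bool" where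
  "bounded_op A I \<longleftrightarrow> (\<exists>C. \<forall>x\<in>l2 I. mapply A I x \<in> l2 I \<and> l2norm (mapply A I x) \<le> C * l2norm x)"

definition band_op :: "imat \<Rightarrow> bool" where
  "band_op A \<longleftrightarrow> (\<exists>w. band_width w A) \<and> bounded_op A UNIV"

definition shift :: imat where
  "shift = (\<lambda>i j. if j = i - 1 then 1 else 0)"

definition shift_pow :: "int \<Rightarrow> imat" where
  "shift_pow \<gamma> = (\<lambda>i j. if j = i - \<gamma> then 1 else 0)"

definition mult_op :: "iseq \<Rightarrow> imat" where
  "mult_op u = (\<lambda>i j. if i = j then u i else 0)"

definition invertible_on :: "imat \<Rightarrow> int set \<Rightarrow> bool" where
  "invertible_on A I \<longleftrightarrow> bounded_op A I \<and> bij_betw (mapply A I) (l2 I) (l2 I) \<and>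
     (\<exists>C. \<forall>y\<in>l2 I. l2norm (the_inv_into (l2 I) (mapply A I) y) \<le> C * l2norm y)"

definition inv_norm :: "imat \<Rightarrow> int set \<Rightarrow> ereal" where
  "inv_norm A I = (if invertible_on A I
      then Sup {ereal (l2norm (the_inv_into (l2 I) (mapply A I) y)) | y. y \<in> l2 I \<and> l2norm y = 1}
      else \<infinity>)"

definition spectrum_on :: "imat \<Rightarrow> int set \<Rightarrow> complex set" where
  "spectrum_on A I = {z. \<not> invertible_on (mshift A z) I}"

definition nu :: "nat \<Rightarrow> imat \<Rightarrow> int set \<Rightarrow> real" where
  "nu N A I = Inf {l2norm (mapply A I x) | x. x \<in> l2 I \<and> l2norm x = 1 \<and>
      (\<forall>i j. x i \<noteq> 0 \<longrightarrow> x j \<noteq> 0 \<longrightarrow> \<bar>i - j\<bar> < int N)}"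

text \<open>nu_{l..r}(A^+): smallest singular value of the finite (r+w) x (r-l+1) submatrix
  (A_ij), i in 1..r+w, j in l..r (number of rows >= number of columns), i.e.
  min over unit vectors x in C^{l..r} of the Euclidean norm of the product.\<close>
definition nu_win :: "nat \<Rightarrow> imat \<Rightarrow> int \<Rightarrow> int \<Rightarrow> real" where
  "nu_win w A l r = Inf {sqrt (\<Sum>i\<in>{1..r + int w}. (cmod (\<Sum>k\<in>{l..r}. A i k * x k))\<^sup>2) | x.
      (\<Sum>k\<in>{l..r}. (cmod (x k))\<^sup>2) = 1}"

definition subwords :: "int set \<Rightarrow> iseq \<Rightarrow> complex list set" where
  "subwords I b = {map (\<lambda>k. b (i + int k)) [0..<n] | i n. \<forall>k<n. i + int k \<in> I}"

definition Nplus :: "int set" where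
  "Nplus = {1..}"

end

theory Submission
  imports Defs "HOL-Library.Diagonal_Subsequence"
begin


lemma l2_iff: "x \<in> l2 I \<longleftrightarrow> (\<forall>i. i \<notin> I \<longrightarrow> x i = 0) \<and> (\<lambda>i. (cmod (x i))\<^sup>2) summable_on UNIV"
  by (simp add: l2_def)

lemma l2norm_nonneg: "l2norm x \<ge> 0"
  unfolding l2norm_def by (simp add: infsum_nonneg)

lemma l2norm_sq: "(l2norm x)\<^sup>2 = (\<Sum>\<^sub>\<infinity>i. (cmod (x i))\<^sup>2)"
  unfolding l2norm_def by (simp add: infsum_nonneg)

lemma fin_sum_le_l2:
  fixes x :: iseq
  assumes "(\<lambda>i. (cmod (x i))\<^sup>2) summable_on UNIV" "finite F"
  shows "(\<Sum>i\<in>F. (cmod (x i))\<^sup>2) \<le> (l2norm x)\<^sup>2"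
  unfolding l2norm_sq by (rule finite_sum_le_infsum[OF assms]) auto

lemma coord_le_l2:
  fixes x :: iseq
  assumes "(\<lambda>i. (cmod (x i))\<^sup>2) summable_on UNIV"
  shows "cmod (x j) \<le> l2norm x"
proof -
  have "(cmod (x j))\<^sup>2 \<le> (l2norm x)\<^sup>2" using fin_sum_le_l2[OF assms, of "{j}"] by simp
  thus ?thesis using l2norm_nonneg power2_le_imp_le by blast
qed

lemma bound_summable:
  fixes x :: iseq
  assumes "\<And>F. finite F \<Longrightarrow> (\<Sum>i\<in>F. (cmod (x i))\<^sup>2) \<le> B"
  shows "(\<lambda>i. (cmod (x i))\<^sup>2) summable_on UNIV" "(l2norm x)\<^sup>2 \<le> B"
proof -
  show s: "(\<lambda>i. (cmod (x i))\<^sup>2) summable_on UNIV"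
    by (rule nonneg_bdd_above_summable_on) (auto intro!: bdd_aboveI[where M=B] assms)
  show "(l2norm x)\<^sup>2 \<le> B" unfolding l2norm_sq by (rule infsum_le_finite_sums[OF s]) (rule assms)
qed

lemma fin_l2:
  fixes x :: iseq
  assumes "finite F" "\<And>i. i \<notin> F \<Longrightarrow> x i = 0"
  shows "(\<lambda>i. (cmod (x i))\<^sup>2) summable_on UNIV" "l2norm x = sqrt (\<Sum>i\<in>F. (cmod (x i))\<^sup>2)"
proof -
  have h: "((\<lambda>i. (cmod (x i))\<^sup>2) has_sum (\<Sum>i\<in>F. (cmod (x i))\<^sup>2)) UNIV"
    by (rule has_sum_finite_neutralI) (use assms in auto)
  show "(\<lambda>i. (cmod (x i))\<^sup>2) summable_on UNIV" using h has_sum_imp_summable by blast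
  show "l2norm x = sqrt (\<Sum>i\<in>F. (cmod (x i))\<^sup>2)" unfolding l2norm_def using h infsumI by metis
qed

lemma bij_plus: "bij_betw (\<lambda>i::int. i + c) UNIV UNIV"
  by (rule bij_betwI[where g="\<lambda>i. i - c"]) auto

lemma l2norm_shift: "l2norm (\<lambda>i. x (i + c)) = l2norm x"
  using infsum_reindex_bij_betw[OF bij_plus, of "\<lambda>i. (cmod (x i))\<^sup>2" c] unfolding l2norm_def by simp

lemma summable_shift: fixes x :: iseq shows "(\<lambda>i. (cmod (x (i + c)))\<^sup>2) summable_on UNIV \<longleftrightarrow> (\<lambda>i. (cmod (x i))\<^sup>2) summable_on UNIV"
  using summable_on_reindex_bij_betw[OF bij_plus, of "\<lambda>i. (cmod (x i))\<^sup>2" c] by simp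

lemma l2norm_zero: "l2norm (\<lambda>i. 0) = 0"
  unfolding l2norm_def by simp

lemma l2norm_eq0:
  fixes x :: iseq
  assumes "(\<lambda>i. (cmod (x i))\<^sup>2) summable_on UNIV" "l2norm x = 0"
  shows "x j = 0"
  using coord_le_l2[OF assms(1), of j] assms(2) by simp

lemma mapply_fin:
  assumes "finite S" "S \<subseteq> I" "\<And>k. k \<notin> S \<Longrightarrow> x k = 0"
  shows "mapply A I x i = (if i \<in> I then (\<Sum>k\<in>S. A i k * x k) else 0)"
proof -
  have "(\<Sum>\<^sub>\<infinity>j\<in>I. A i j * x j) = (\<Sum>\<^sub>\<infinity>j\<in>S. A i j * x j)"
    by (rule infsum_cong_neutral) (use assms in auto)
  thus ?thesis unfolding mapply_def using assms(1) by simp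
qed

lemma mapply_band:
  assumes "band_width w A"
  shows "mapply A I x i = (if i \<in> I then (\<Sum>k\<in>{i - int w..i + int w} \<inter> I. A i k * x k) else 0)"
proof -
  have "(\<Sum>\<^sub>\<infinity>j\<in>I. A i j * x j) = (\<Sum>\<^sub>\<infinity>j\<in>{i - int w..i + int w} \<inter> I. A i j * x j)"
    by (rule infsum_cong_neutral) (use assms in \<open>auto simp: band_width_def\<close>)
  thus ?thesis unfolding mapply_def by simp
qed

lemma l2_scale:
  assumes "x \<in> l2 I"
  shows "(\<lambda>i. c * x i) \<in> l2 I" "l2norm (\<lambda>i. c * x i) = cmod c * l2norm x"
proof -
  have e: "(\<lambda>i. (cmod (c * x i))\<^sup>2) = (\<lambda>i. (cmod c)\<^sup>2 * (cmod (x i))\<^sup>2)"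
    by (simp add: norm_mult power_mult_distrib)
  show "(\<lambda>i. c * x i) \<in> l2 I" using assms unfolding l2_iff e
    by (auto intro: summable_on_cmult_right)
  show "l2norm (\<lambda>i. c * x i) = cmod c * l2norm x"
    unfolding l2norm_def e infsum_cmult_right' by (simp add: real_sqrt_mult)
qed

lemma mapply_scale: "mapply A I (\<lambda>j. c * x j) = (\<lambda>i. c * mapply A I x i)"
proof
  fix i
  have "(\<Sum>\<^sub>\<infinity>j\<in>I. A i j * (c * x j)) = (\<Sum>\<^sub>\<infinity>j\<in>I. c * (A i j * x j))"
    by (simp add: algebra_simps)
  also have "\<dots> = c * (\<Sum>\<^sub>\<infinity>j\<in>I. A i j * x j)" by (rule infsum_cmult_right')
  finally show "mapply A I (\<lambda>j. c * x j) i = c * mapply A I x i" unfolding mapply_def by simp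
qed

lemma l2_diff:
  assumes "x \<in> l2 I" "y \<in> l2 I"
  shows "(\<lambda>i. x i - y i) \<in> l2 I"
proof -
  have sx: "(\<lambda>i. (cmod (x i))\<^sup>2) summable_on UNIV" and sy: "(\<lambda>i. (cmod (y i))\<^sup>2) summable_on UNIV"
    using assms by (auto simp: l2_iff)
  have pt: "(cmod (x i - y i))\<^sup>2 \<le> 2 * (cmod (x i))\<^sup>2 + 2 * (cmod (y i))\<^sup>2" for i
  proof -
    have "cmod (x i - y i) \<le> cmod (x i) + cmod (y i)" by (rule norm_triangle_ineq4)
    hence "(cmod (x i - y i))\<^sup>2 \<le> (cmod (x i) + cmod (y i))\<^sup>2" by (simp add: power_mono)
    also have "\<dots> \<le> 2 * (cmod (x i))\<^sup>2 + 2 * (cmod (y i))\<^sup>2"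
      by (smt (verit, best) power2_sum sum_squares_bound)
    finally show ?thesis .
  qed
  have "(\<Sum>i\<in>F. (cmod (x i - y i))\<^sup>2) \<le> 2 * (l2norm x)\<^sup>2 + 2 * (l2norm y)\<^sup>2" if "finite F" for F
  proof -
    have "(\<Sum>i\<in>F. (cmod (x i - y i))\<^sup>2) \<le> (\<Sum>i\<in>F. 2 * (cmod (x i))\<^sup>2 + 2 * (cmod (y i))\<^sup>2)"
      by (rule sum_mono) (rule pt)
    also have "\<dots> = 2 * (\<Sum>i\<in>F. (cmod (x i))\<^sup>2) + 2 * (\<Sum>i\<in>F. (cmod (y i))\<^sup>2)"
      by (simp add: sum.distrib sum_distrib_left)
    also have "\<dots> \<le> 2 * (l2norm x)\<^sup>2 + 2 * (l2norm y)\<^sup>2"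
      using fin_sum_le_l2[OF sx that] fin_sum_le_l2[OF sy that] by simp
    finally show ?thesis .
  qed
  from bound_summable(1)[OF this] show ?thesis using assms by (auto simp: l2_iff)
qed

lemma infsum_single_pt:
  fixes f :: "int \<Rightarrow> complex"
  assumes "\<And>k. k \<noteq> a \<Longrightarrow> f k = 0"
  shows "(\<Sum>\<^sub>\<infinity>k. f k) = f a"
proof -
  have "(\<Sum>\<^sub>\<infinity>k. f k) = (\<Sum>\<^sub>\<infinity>k\<in>{a}. f k)"
    by (rule infsum_cong_neutral) (use assms in auto)
  thus ?thesis by simp
qed

lemma Nplus_iff: "i \<in> Nplus \<longleftrightarrow> i \<ge> 1"
  by (simp add: Nplus_def)

lemma sum_shift_int:
  fixes f :: "int \<Rightarrow> 'a::comm_monoid_add"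
  shows "(\<Sum>k\<in>{a + c..a' + c}. f k) = (\<Sum>k\<in>{a..a'}. f (k + c))"
  by (rule sum.reindex_bij_witness[where i="\<lambda>k. k + c" and j="\<lambda>k. k - c"]) auto

locale setting =
  fixes T :: imat and b :: iseq and w :: nat and K :: real
  assumes band: "band_width w T"
    and bound: "\<And>i j. cmod (T i j) \<le> K"
    and shiftinv: "\<And>i j c. b (j + c) = b j \<Longrightarrow> T (i + c) (j + c) = T i j"
    and words: "\<And>a a' (d::nat). \<exists>c. c + a - int d \<ge> 1 \<and> (\<forall>j. a \<le> j \<and> j \<le> a' \<longrightarrow> b (j + c) = b j)"
begin

lemma K_nonneg: "K \<ge> 0"
  using bound[of 0 0] norm_ge_zero order_trans by blast

lemma band0: "\<bar>i - j\<bar> > int w \<Longrightarrow> T i j = 0"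
  using band by (simp add: band_width_def)

lemma copy:
  assumes x0: "\<And>k. k < a \<or> k > a' \<Longrightarrow> x k = 0"
    and c1: "c + a - int w \<ge> 1"
    and bm: "\<forall>j. a \<le> j \<and> j \<le> a' \<longrightarrow> b (j + c) = b j"
  shows "(\<lambda>i. x (i - c)) \<in> l2 Nplus" "l2norm (\<lambda>i. x (i - c)) = l2norm x"
    "l2norm (mapply T Nplus (\<lambda>i. x (i - c))) = l2norm (mapply T UNIV x)"
proof -
  have z': "(\<lambda>i. x (i - c)) k = 0" if "k \<notin> {a + c..a' + c}" for k
    using x0[of "k - c"] that by auto
  show "(\<lambda>i. x (i - c)) \<in> l2 Nplus"
    unfolding l2_iff using fin_l2(1)[of "{a + c..a' + c}" "\<lambda>i. x (i - c)"] z' c1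
    by (auto simp: Nplus_iff)
  show "l2norm (\<lambda>i. x (i - c)) = l2norm x"
    using l2norm_shift[of x "- c"] by simp
  have S: "{a + c..a' + c} \<subseteq> Nplus" using c1 by (auto simp: Nplus_iff)
  have eq: "mapply T Nplus (\<lambda>i. x (i - c)) i = mapply T UNIV x (i + - c)" for i
  proof -
    have l: "mapply T Nplus (\<lambda>i. x (i - c)) i = (if i \<in> Nplus then (\<Sum>k\<in>{a + c..a' + c}. T i k * x (k - c)) else 0)"
      by (rule mapply_fin) (use z' S in auto)
    have r: "mapply T UNIV x (i + - c) = (\<Sum>k\<in>{a..a'}. T (i - c) k * x k)"
      by (subst mapply_fin[where S="{a..a'}"]) (use x0 in auto)
    show ?thesis
    proof (cases "i \<in> Nplus")
      case True
      have "(\<Sum>k\<in>{a + c..a' + c}. T i k * x (k - c)) = (\<Sum>k\<in>{a..a'}. T i (k + c) * x k)"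
        by (subst sum_shift_int) simp
      also have "\<dots> = (\<Sum>k\<in>{a..a'}. T (i - c) k * x k)"
      proof (rule sum.cong[OF refl])
        fix k assume "k \<in> {a..a'}"
        hence "b (k + c) = b k" using bm by auto
        from shiftinv[OF this, of "i - c"] show "T i (k + c) * x k = T (i - c) k * x k" by simp
      qed
      finally show ?thesis using l r True by simp
    next
      case False
      have "T (i - c) k = 0" if "k \<in> {a..a'}" for k
        using False that c1 by (intro band0) (auto simp: Nplus_iff)
      thus ?thesis using l r False by simp
    qed
  qed
  show "l2norm (mapply T Nplus (\<lambda>i. x (i - c))) = l2norm (mapply T UNIV x)"
  proof -
    have "mapply T Nplus (\<lambda>i. x (i - c)) = (\<lambda>i. mapply T UNIV x (i - c))" using eq by (simp add: fun_eq_iff)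
    thus ?thesis using l2norm_shift[of "mapply T UNIV x" "- c"] by simp
  qed
qed

lemma win:
  assumes x0: "\<And>k. k < l \<or> k > r \<Longrightarrow> x k = 0" and l1: "1 \<le> l"
  shows "l2norm (mapply T Nplus x) = sqrt (\<Sum>i\<in>{1..r + int w}. (cmod (\<Sum>k\<in>{l..r}. T i k * x k))\<^sup>2)"
proof -
  have m: "mapply T Nplus x i = (if i \<in> Nplus then (\<Sum>k\<in>{l..r}. T i k * x k) else 0)" for i
    by (rule mapply_fin) (use x0 l1 in \<open>auto simp: Nplus_iff\<close>)
  have "mapply T Nplus x i = 0" if "i \<notin> {1..r + int w}" for i
  proof (cases "i \<in> Nplus")
    case True
    hence "i > r + int w" using that by (auto simp: Nplus_iff)
    hence "T i k = 0" if "k \<in> {l..r}" for k using that by (intro band0) auto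
    thus ?thesis using m True by simp
  qed (use m in auto)
  from fin_l2(2)[of "{1..r + int w}", OF _ this] have
    "l2norm (mapply T Nplus x) = sqrt (\<Sum>i\<in>{1..r + int w}. (cmod (mapply T Nplus x i))\<^sup>2)" by simp
  also have "\<dots> = sqrt (\<Sum>i\<in>{1..r + int w}. (cmod (\<Sum>k\<in>{l..r}. T i k * x k))\<^sup>2)"
    by (rule arg_cong[where f=sqrt], rule sum.cong) (auto simp: m Nplus_iff)
  finally show ?thesis .
qed

lemma win_UNIV:
  assumes x0: "\<And>k. k < l \<or> k > r \<Longrightarrow> x k = 0" and l1: "int w + 1 \<le> l"
  shows "mapply T Nplus x = mapply T UNIV x"
proof
  fix i
  have m: "mapply T Nplus x i = (if i \<in> Nplus then (\<Sum>k\<in>{l..r}. T i k * x k) else 0)"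
    by (rule mapply_fin) (use x0 l1 in \<open>auto simp: Nplus_iff\<close>)
  have m2: "mapply T UNIV x i = (\<Sum>k\<in>{l..r}. T i k * x k)"
    by (subst mapply_fin[where S="{l..r}"]) (use x0 in auto)
  show "mapply T Nplus x i = mapply T UNIV x i"
  proof (cases "i \<in> Nplus")
    case False
    hence "T i k = 0" if "k \<in> {l..r}" for k using that l1 by (intro band0) (auto simp: Nplus_iff)
    thus ?thesis using m m2 False by simp
  qed (use m m2 in auto)
qed

end



context setting
begin

lemma nu_formula:
  assumes N1: "N \<ge> 1"
  shows "nu N T Nplus = Min ({nu_win w T (int j) (int j + int N - 1) | j. j \<in> {1..w}} \<union> {nu N T UNIV})"
proof -
  define SP where "SP = {l2norm (mapply T Nplus x) | x. x \<in> l2 Nplus \<and> l2norm x = 1 \<and>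
      (\<forall>i j. x i \<noteq> 0 \<longrightarrow> x j \<noteq> 0 \<longrightarrow> \<bar>i - j\<bar> < int N)}"
  define SU where "SU = {l2norm (mapply T UNIV x) | x. x \<in> l2 UNIV \<and> l2norm x = 1 \<and>
      (\<forall>i j. x i \<noteq> 0 \<longrightarrow> x j \<noteq> 0 \<longrightarrow> \<bar>i - j\<bar> < int N)}"
  define W where "W l r = {sqrt (\<Sum>i\<in>{1..r + int w}. (cmod (\<Sum>k\<in>{l..r}. T i k * x k))\<^sup>2) | x.
      (\<Sum>k\<in>{l..r}. (cmod (x k))\<^sup>2) = 1}" for l r
  define f where "f j = nu_win w T (int j) (int j + int N - 1)" for j
  define M where "M = f ` {1..w} \<union> {nu N T UNIV}"
  have Meq: "{nu_win w T (int j) (int j + int N - 1) | j. j \<in> {1..w}} \<union> {nu N T UNIV} = M"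
    unfolding M_def f_def by auto
  have nuP: "nu N T Nplus = Inf SP" unfolding nu_def SP_def by simp
  have nuU: "nu N T UNIV = Inf SU" unfolding nu_def SU_def by simp
  have fW: "f j = Inf (W (int j) (int j + int N - 1))" for j unfolding f_def nu_win_def W_def by simp
  have bSP: "bdd_below SP" unfolding SP_def by (rule bdd_belowI[where m=0]) (auto simp: l2norm_nonneg)
  have bSU: "bdd_below SU" unfolding SU_def by (rule bdd_belowI[where m=0]) (auto simp: l2norm_nonneg)
  have bW: "bdd_below (W l r)" for l r unfolding W_def by (rule bdd_belowI[where m=0]) (auto intro!: sum_nonneg)
  define e where "e p = (\<lambda>i::int. if i = p then (1::complex) else 0)" for p
  have e_fin: "(\<lambda>i. (cmod (e p i))\<^sup>2) summable_on UNIV" "l2norm (e p) = 1" for p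
    using fin_l2[of "{p}" "e p"] by (auto simp: e_def)
  have SPne: "SP \<noteq> {}"
  proof -
    have "e 1 \<in> l2 Nplus" using e_fin by (auto simp: l2_iff e_def Nplus_iff)
    hence "l2norm (mapply T Nplus (e 1)) \<in> SP" unfolding SP_def mem_Collect_eq
      by (intro exI[of _ "e 1"]) (use e_fin N1 in \<open>auto simp: e_def\<close>)
    thus ?thesis by blast
  qed
  have SUne: "SU \<noteq> {}"
  proof -
    have "e 1 \<in> l2 UNIV" using e_fin by (auto simp: l2_iff e_def)
    hence "l2norm (mapply T UNIV (e 1)) \<in> SU" unfolding SU_def mem_Collect_eq
      by (intro exI[of _ "e 1"]) (use e_fin N1 in \<open>auto simp: e_def\<close>)
    thus ?thesis by blast
  qed
  have Wne: "W l (l + int N - 1) \<noteq> {}" for l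
  proof -
    have "(\<Sum>k\<in>{l..l + int N - 1}. (cmod (e l k))\<^sup>2) = (\<Sum>k\<in>{l..l + int N - 1}. if k = l then 1 else 0)"
      by (rule sum.cong) (auto simp: e_def)
    also have "\<dots> = 1" using N1 by (simp add: sum.delta)
    finally have "(\<Sum>k\<in>{l..l + int N - 1}. (cmod (e l k))\<^sup>2) = 1" .
    thus ?thesis unfolding W_def by blast
  qed
  have finM: "finite M" and neM: "M \<noteq> {}" unfolding M_def by auto
  have A: "Min M \<le> v" if "v \<in> SP" for v
  proof -
    from that obtain x where v: "v = l2norm (mapply T Nplus x)" and xl: "x \<in> l2 Nplus"
      and xn: "l2norm x = 1" and xd: "\<forall>i j. x i \<noteq> 0 \<longrightarrow> x j \<noteq> 0 \<longrightarrow> \<bar>i - j\<bar> < int N"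
      unfolding SP_def by blast
    have xs: "(\<lambda>i. (cmod (x i))\<^sup>2) summable_on UNIV" and xo: "\<And>i. i < 1 \<Longrightarrow> x i = 0"
      using xl by (auto simp: l2_iff Nplus_iff)
    obtain s where s: "x s \<noteq> 0"
    proof (rule ccontr)
      assume "\<not> thesis"
      hence "x = (\<lambda>i. 0)" using that by auto
      thus False using xn l2norm_zero by simp
    qed
    define Q where "Q = {i \<in> {s - int N + 1..s}. x i \<noteq> 0}"
    define l where "l = Min Q"
    have Qf: "finite Q" unfolding Q_def by (rule finite_subset[of _ "{s - int N + 1..s}"]) auto
    have sQ: "s \<in> Q" using N1 s by (auto simp: Q_def)
    have lQ: "l \<in> Q" unfolding l_def using Qf sQ by (intro Min_in) auto
    have xl0: "x l \<noteq> 0" using lQ by (simp add: Q_def)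
    have l1: "l \<ge> 1" using xl0 xo by force
    have supp: "x k = 0" if "k < l \<or> k > l + int N - 1" for k
    proof (rule ccontr)
      assume xk: "x k \<noteq> 0"
      have "\<bar>k - s\<bar> < int N" "\<bar>k - l\<bar> < int N" using xd xk s xl0 by auto
      moreover have "k \<ge> l" 
      proof (rule ccontr)
        assume "\<not> k \<ge> l"
        hence "k \<le> s" using lQ by (auto simp: Q_def)
        with \<open>\<bar>k - s\<bar> < int N\<close> xk have "k \<in> Q" by (auto simp: Q_def)
        hence "l \<le> k" unfolding l_def using Qf by simp
        with \<open>\<not> k \<ge> l\<close> show False by simp
      qed
      ultimately show False using that by auto
    qed
    show ?thesis
    proof (cases "l \<le> int w")
      case True
      define j where "j = nat l"
      have j: "j \<in> {1..w}" "int j = l" using True l1 by (auto simp: j_def)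
      have "l2norm x = sqrt (\<Sum>k\<in>{l..l + int N - 1}. (cmod (x k))\<^sup>2)"
        by (rule fin_l2(2)) (use supp in auto)
      hence s1: "(\<Sum>k\<in>{l..l + int N - 1}. (cmod (x k))\<^sup>2) = 1" using xn
        by (metis real_sqrt_eq_1_iff)
      have "v = sqrt (\<Sum>i\<in>{1..(l + int N - 1) + int w}. (cmod (\<Sum>k\<in>{l..l + int N - 1}. T i k * x k))\<^sup>2)"
        unfolding v by (rule win) (use supp l1 in auto)
      hence "v \<in> W l (l + int N - 1)" unfolding W_def using s1 by blast
      hence "f j \<le> v" unfolding fW j(2) by (rule cInf_lower[OF _ bW])
      moreover have "Min M \<le> f j" by (rule Min_le[OF finM]) (use j(1) in \<open>auto simp: M_def\<close>)
      ultimately show ?thesis by simp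
    next
      case False
      have "mapply T Nplus x = mapply T UNIV x"
        by (rule win_UNIV[where l=l and r="l + int N - 1"]) (use supp False in auto)
      moreover have "x \<in> l2 UNIV" using xs by (simp add: l2_iff)
      ultimately have "v \<in> SU" unfolding SU_def v mem_Collect_eq using xn xd by (intro exI[of _ x]) simp
      hence "nu N T UNIV \<le> v" unfolding nuU by (rule cInf_lower[OF _ bSU])
      moreover have "Min M \<le> nu N T UNIV" by (rule Min_le[OF finM]) (auto simp: M_def)
      ultimately show ?thesis by simp
    qed
  qed
  have B: "Inf SP \<le> u" if uM: "u \<in> M" for u
  proof -
    consider (a) j where "j \<in> {1..w}" "u = f j" | (b) "u = nu N T UNIV" using uM by (auto simp: M_def)
    thus ?thesis
    proof cases
      case a
      define l where "l = int j"
      define r where "r = l + int N - 1"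
      have l1: "l \<ge> 1" using a by (simp add: l_def)
      have "Inf SP \<le> Inf (W l r)"
      proof (rule cInf_greatest)
        show "W l r \<noteq> {}" unfolding r_def by (rule Wne)
        fix v assume "v \<in> W l r"
        then obtain x where v: "v = sqrt (\<Sum>i\<in>{1..r + int w}. (cmod (\<Sum>k\<in>{l..r}. T i k * x k))\<^sup>2)"
          and s1: "(\<Sum>k\<in>{l..r}. (cmod (x k))\<^sup>2) = 1" unfolding W_def by blast
        define x' where "x' = (\<lambda>k. if l \<le> k \<and> k \<le> r then x k else 0)"
        have x'0: "x' k = 0" if "k < l \<or> k > r" for k using that by (auto simp: x'_def)
        have "(\<lambda>i. (cmod (x' i))\<^sup>2) summable_on UNIV" "l2norm x' = sqrt (\<Sum>k\<in>{l..r}. (cmod (x' k))\<^sup>2)"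
        proof -
          have x'F: "\<And>i. i \<notin> {l..r} \<Longrightarrow> x' i = 0" using x'0 by auto
          show "(\<lambda>i. (cmod (x' i))\<^sup>2) summable_on UNIV" "l2norm x' = sqrt (\<Sum>k\<in>{l..r}. (cmod (x' k))\<^sup>2)"
            using fin_l2[of "{l..r}" x', OF finite_atLeastAtMost_int x'F] by auto
        qed
        moreover have "(\<Sum>k\<in>{l..r}. (cmod (x' k))\<^sup>2) = 1" using s1 by (simp add: x'_def)
        ultimately have x'l: "x' \<in> l2 Nplus" and x'n: "l2norm x' = 1"
          using x'0 l1 by (auto simp: l2_iff Nplus_iff)
        have x'd: "\<forall>i j. x' i \<noteq> 0 \<longrightarrow> x' j \<noteq> 0 \<longrightarrow> \<bar>i - j\<bar> < int N"
        proof (intro allI impI)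
          fix i j assume "x' i \<noteq> 0" "x' j \<noteq> 0"
          hence "l \<le> i" "i \<le> r" "l \<le> j" "j \<le> r" using x'0 by (meson not_le)+
          thus "\<bar>i - j\<bar> < int N" by (simp add: r_def)
        qed
        have "l2norm (mapply T Nplus x') = sqrt (\<Sum>i\<in>{1..r + int w}. (cmod (\<Sum>k\<in>{l..r}. T i k * x' k))\<^sup>2)"
          by (rule win) (use x'0 l1 in auto)
        also have "\<dots> = v" unfolding v by (simp add: x'_def)
        finally have "v \<in> SP" unfolding SP_def using x'l x'n x'd by blast
        thus "Inf SP \<le> v" by (rule cInf_lower[OF _ bSP])
      qed
      thus ?thesis using a by (simp add: fW l_def r_def)
    next
      case b
      have "Inf SP \<le> Inf SU"
      proof (rule cInf_greatest[OF SUne])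
        fix v assume "v \<in> SU"
        then obtain x where v: "v = l2norm (mapply T UNIV x)" and xl: "x \<in> l2 UNIV"
          and xn: "l2norm x = 1" and xd: "\<forall>i j. x i \<noteq> 0 \<longrightarrow> x j \<noteq> 0 \<longrightarrow> \<bar>i - j\<bar> < int N"
          unfolding SU_def by blast
        obtain s where s: "x s \<noteq> 0"
        proof (rule ccontr)
          assume "\<not> thesis"
          hence "x = (\<lambda>i. 0)" using that by auto
          thus False using xn l2norm_zero by simp
        qed
        have x0: "x k = 0" if "k < s - int N + 1 \<or> k > s + int N - 1" for k
          using xd s that by force
        obtain c where c: "c + (s - int N + 1) - int w \<ge> 1"
          "\<forall>j. s - int N + 1 \<le> j \<and> j \<le> s + int N - 1 \<longrightarrow> b (j + c) = b j"
          using words by blast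
        note cp = copy[where x=x and c=c and a="s - int N + 1" and a'="s + int N - 1", OF x0 c]
        have "\<forall>i j. x (i - c) \<noteq> 0 \<longrightarrow> x (j - c) \<noteq> 0 \<longrightarrow> \<bar>i - j\<bar> < int N"
        proof (intro allI impI)
          fix i j assume "x (i - c) \<noteq> 0" "x (j - c) \<noteq> 0"
          hence "\<bar>(i - c) - (j - c)\<bar> < int N" using xd by blast
          thus "\<bar>i - j\<bar> < int N" by simp
        qed
        hence "v \<in> SP" unfolding SP_def v mem_Collect_eq using cp xn by (intro exI[of _ "\<lambda>i. x (i - c)"]) simp
        thus "Inf SP \<le> v" by (rule cInf_lower[OF _ bSP])
      qed
      thus ?thesis using b nuU by simp
    qed
  qed
  have "Inf SP = Min M"
  proof (rule antisym)
    show "Inf SP \<le> Min M" using B Min_in[OF finM neM] by blast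
    show "Min M \<le> Inf SP" using A by (intro cInf_greatest[OF SPne]) auto
  qed
  thus ?thesis using nuP Meq by simp
qed

end



lemma diag_conv:
  fixes X :: "nat \<Rightarrow> int \<Rightarrow> complex"
  assumes bd: "\<And>n j. cmod (X n j) \<le> B"
  shows "\<exists>\<phi> x. strict_mono \<phi> \<and> (\<forall>j. (\<lambda>k. X (\<phi> k) j) \<longlonglongrightarrow> x j)"
proof -
  define P where "P n s = convergent (\<lambda>k. X (s k) (int_decode n))" for n and s :: "nat \<Rightarrow> nat"
  interpret subseqs P
  proof
    fix n and s :: "nat \<Rightarrow> nat" assume "strict_mono s"
    have "bounded (range (\<lambda>k. X (s k) (int_decode n)))"
      unfolding bounded_iff using bd by blast
    from bounded_imp_convergent_subsequence[OF this] obtain l r where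
      "strict_mono r" "((\<lambda>k. X (s k) (int_decode n)) \<circ> r) \<longlonglongrightarrow> l" by blast
    thus "\<exists>r'. strict_mono r' \<and> P n (s \<circ> r')"
      unfolding P_def convergent_def by (intro exI[of _ r]) (auto simp: o_def)
  qed
  have conv: "convergent (\<lambda>k. X (diagseq k) j)" for j
  proof -
    define n where "n = int_encode j"
    have "P n (diagseq \<circ> ((+) (Suc n)))"
    proof (rule diagseq_holds)
      fix r s :: "nat \<Rightarrow> nat" and n assume "strict_mono r" "P n s"
      thus "P n (s \<circ> r)" unfolding P_def using convergent_subseq_convergent[of "\<lambda>k. X (s k) (int_decode n)" r]
        by (simp add: o_def)
    qed
    hence "convergent (\<lambda>k. X (diagseq (k + Suc n)) j)" unfolding P_def n_def by (simp add: o_def add.commute)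
    then obtain L where "(\<lambda>k. X (diagseq (k + Suc n)) j) \<longlonglongrightarrow> L" unfolding convergent_def by blast
    hence "(\<lambda>k. X (diagseq k) j) \<longlonglongrightarrow> L" by (rule LIMSEQ_offset)
    thus ?thesis unfolding convergent_def by blast
  qed
  show ?thesis
    by (intro exI[of _ diagseq] exI[of _ "\<lambda>j. lim (\<lambda>k. X (diagseq k) j)"])
       (use subseq_diagseq conv in \<open>auto simp: convergent_LIMSEQ_iff\<close>)
qed

context setting
begin

lemma mapply_U: "mapply T UNIV x i = (\<Sum>k\<in>{i - int w..i + int w}. T i k * x k)"
  using mapply_band[OF band, of UNIV x i] by simp

lemma sum_recenter:
  fixes f :: "int \<Rightarrow> 'a::comm_monoid_add"
  shows "(\<Sum>k\<in>{i - int w..i + int w}. f k) = (\<Sum>d\<in>{- int w..int w}. f (i + d))"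
  by (rule sum.reindex_bij_witness[where i="\<lambda>d. i + d" and j="\<lambda>k. k - i"]) auto

lemma mapply_diff: "mapply T UNIV (\<lambda>i. x i - y i) = (\<lambda>i. mapply T UNIV x i - mapply T UNIV y i)"
  unfolding mapply_U by (simp add: right_diff_distrib sum_subtractf)

lemma bounded_T:
  assumes xl: "x \<in> l2 UNIV"
  shows "mapply T UNIV x \<in> l2 UNIV" "l2norm (mapply T UNIV x) \<le> (2 * w + 1) * K * l2norm x"
proof -
  have xs: "(\<lambda>i. (cmod (x i))\<^sup>2) summable_on UNIV" using xl by (simp add: l2_iff)
  define D where "D = {- int w..int w}"
  have cD: "card D = 2 * w + 1" unfolding D_def by simp
  have pt: "(cmod (mapply T UNIV x i))\<^sup>2 \<le> (2 * w + 1) * K\<^sup>2 * (\<Sum>d\<in>D. (cmod (x (i + d)))\<^sup>2)" for i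
  proof -
    have "cmod (mapply T UNIV x i) = cmod (\<Sum>d\<in>D. T i (i + d) * x (i + d))"
      unfolding mapply_U sum_recenter D_def ..
    also have "\<dots> \<le> (\<Sum>d\<in>D. K * cmod (x (i + d)))"
      by (rule order_trans[OF norm_sum sum_mono]) (simp add: norm_mult mult_right_mono bound)
    finally have "(cmod (mapply T UNIV x i))\<^sup>2 \<le> (\<Sum>d\<in>D. K * cmod (x (i + d)))\<^sup>2"
      by (simp add: power_mono)
    also have "\<dots> \<le> (\<Sum>d\<in>D. (K * cmod (x (i + d)))\<^sup>2) * card D"
      by (rule sum_squared_le_sum_of_squares)
    also have "\<dots> = K\<^sup>2 * (\<Sum>d\<in>D. (cmod (x (i + d)))\<^sup>2) * card D"
      by (simp add: power_mult_distrib sum_distrib_left)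
    also have "\<dots> = (2 * w + 1) * K\<^sup>2 * (\<Sum>d\<in>D. (cmod (x (i + d)))\<^sup>2)"
      unfolding cD by (simp add: algebra_simps)
    finally show ?thesis .
  qed
  have fs: "(\<Sum>i\<in>F. (cmod (mapply T UNIV x i))\<^sup>2) \<le> ((2 * w + 1) * K * l2norm x)\<^sup>2" if "finite F" for F
  proof -
    have "(\<Sum>i\<in>F. (cmod (mapply T UNIV x i))\<^sup>2) \<le> (\<Sum>i\<in>F. (2 * w + 1) * K\<^sup>2 * (\<Sum>d\<in>D. (cmod (x (i + d)))\<^sup>2))"
      by (rule sum_mono) (rule pt)
    also have "\<dots> = (2 * w + 1) * K\<^sup>2 * (\<Sum>d\<in>D. (\<Sum>i\<in>F. (cmod (x (i + d)))\<^sup>2))"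
      unfolding sum_distrib_left[symmetric] by (rule arg_cong[where f="\<lambda>t. (2 * w + 1) * K\<^sup>2 * t"], rule sum.swap)
    also have "\<dots> \<le> (2 * w + 1) * K\<^sup>2 * (\<Sum>d\<in>D. (l2norm x)\<^sup>2)"
    proof (rule mult_left_mono[OF sum_mono])
      fix d
      have "(\<lambda>i. (cmod (x (i + d)))\<^sup>2) summable_on UNIV" using summable_shift xs by blast
      from fin_sum_le_l2[OF this that] show "(\<Sum>i\<in>F. (cmod (x (i + d)))\<^sup>2) \<le> (l2norm x)\<^sup>2"
        by (simp add: l2norm_shift)
    qed simp
    also have "\<dots> = ((2 * w + 1) * K * l2norm x)\<^sup>2"
      by (simp add: cD power2_eq_square algebra_simps)
    finally show ?thesis .
  qed
  note bs = bound_summable[OF fs]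
  show "mapply T UNIV x \<in> l2 UNIV" using bs(1) by (simp add: l2_iff)
  show "l2norm (mapply T UNIV x) \<le> (2 * w + 1) * K * l2norm x"
    using bs(2) K_nonneg l2norm_nonneg by (intro power2_le_imp_le[OF bs(2)]) auto
qed

end



lemma e_l2:
  assumes "p \<in> I"
  shows "(\<lambda>i. if i = p then (1::complex) else 0) \<in> l2 I" "l2norm (\<lambda>i. if i = p then (1::complex) else 0) = 1"
  using fin_l2[of "{p}" "\<lambda>i. if i = p then (1::complex) else 0"] assms by (auto simp: l2_iff)

lemma zero_l2: "(\<lambda>i. 0) \<in> l2 I"
  using fin_l2[of "{}" "\<lambda>i. 0"] by (auto simp: l2_iff)

locale inv_setting = setting +
  assumes inv: "invertible_on T Nplus"
begin

definition R where "R = the_inv_into (l2 Nplus) (mapply T Nplus)"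

lemma bijP: "bij_betw (mapply T Nplus) (l2 Nplus) (l2 Nplus)"
  using inv by (simp add: invertible_on_def)

lemma injP: "inj_on (mapply T Nplus) (l2 Nplus)"
  using bijP by (simp add: bij_betw_def)

lemma R_in: "y \<in> l2 Nplus \<Longrightarrow> R y \<in> l2 Nplus"
  unfolding R_def by (rule bij_betw_apply[OF bij_betw_the_inv_into[OF bijP]])

lemma R_eq: "y \<in> l2 Nplus \<Longrightarrow> mapply T Nplus (R y) = y"
  unfolding R_def by (rule f_the_inv_into_f_bij_betw[OF bijP])

lemma R_f: "v \<in> l2 Nplus \<Longrightarrow> R (mapply T Nplus v) = v"
  unfolding R_def by (rule the_inv_into_f_f[OF injP])

lemma map_in: "v \<in> l2 Nplus \<Longrightarrow> mapply T Nplus v \<in> l2 Nplus"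
  by (rule bij_betw_apply[OF bijP])

definition mm where "mm = real_of_ereal (inv_norm T Nplus)"

lemma mm: "inv_norm T Nplus = ereal mm" "mm \<ge> 0"
  "\<And>y. y \<in> l2 Nplus \<Longrightarrow> l2norm y = 1 \<Longrightarrow> l2norm (R y) \<le> mm"
proof -
  obtain C where C: "\<forall>y\<in>l2 Nplus. l2norm (R y) \<le> C * l2norm y"
    using inv unfolding invertible_on_def R_def by blast
  define S where "S = {ereal (l2norm (R y)) | y. y \<in> l2 Nplus \<and> l2norm y = 1}"
  have IS: "inv_norm T Nplus = Sup S" using inv unfolding inv_norm_def S_def R_def by simp
  have up: "Sup S \<le> ereal C"
    by (rule Sup_least) (use C in \<open>auto simp: S_def\<close>)
  define e :: iseq where "e = (\<lambda>i. if i = 1 then (1::complex) else 0)"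
  have el: "e \<in> l2 Nplus" "l2norm e = 1" using e_l2[of 1 Nplus] by (auto simp: e_def Nplus_iff)
  have "ereal (l2norm (R e)) \<in> S" unfolding S_def using el by blast
  hence "ereal (l2norm (R e)) \<le> Sup S" by (rule Sup_upper)
  hence lo: "0 \<le> Sup S" using l2norm_nonneg[of "R e"] order_trans by (metis ereal_less_eq(5))
  have fin: "\<bar>Sup S\<bar> \<noteq> \<infinity>" using up lo by auto
  show e1: "inv_norm T Nplus = ereal mm" unfolding mm_def IS using ereal_real'[OF fin] by simp
  show "mm \<ge> 0" unfolding mm_def IS using lo by (rule real_of_ereal_pos)
  fix y assume "y \<in> l2 Nplus" "l2norm y = 1"
  hence "ereal (l2norm (R y)) \<in> S" unfolding S_def by blast
  hence "ereal (l2norm (R y)) \<le> ereal mm" using e1 IS by (metis Sup_upper)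
  thus "l2norm (R y) \<le> mm" by simp
qed

lemma Rbound:
  assumes yl: "y \<in> l2 Nplus"
  shows "l2norm (R y) \<le> mm * l2norm y"
proof (cases "l2norm y = 0")
  case True
  have ys: "(\<lambda>i. (cmod (y i))\<^sup>2) summable_on UNIV" using yl by (simp add: l2_iff)
  have y0: "y = (\<lambda>i. 0)" using l2norm_eq0[OF ys True] by auto
  have "mapply T Nplus (\<lambda>i. 0) = (\<lambda>i. 0)" by (simp add: mapply_def fun_eq_iff)
  hence "R y = (\<lambda>i. 0)" using R_f[OF zero_l2] y0 by simp
  thus ?thesis using True by (simp add: l2norm_zero)
next
  case False
  define s where "s = l2norm y"
  have s0: "s > 0" using False l2norm_nonneg[of y] by (simp add: s_def)
  define u where "u = (\<lambda>i. complex_of_real (1 / s) * y i)"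
  have ul: "u \<in> l2 Nplus" and un: "l2norm u = 1"
    using l2_scale[OF yl, of "complex_of_real (1 / s)"] s0 by (auto simp: u_def s_def norm_divide)
  define v where "v = (\<lambda>i. complex_of_real s * R u i)"
  have vl: "v \<in> l2 Nplus" and vn: "l2norm v = s * l2norm (R u)"
    using l2_scale[OF R_in[OF ul], of "complex_of_real s"] s0 by (auto simp: v_def)
  have "mapply T Nplus v = (\<lambda>i. complex_of_real s * mapply T Nplus (R u) i)"
    unfolding v_def by (rule mapply_scale)
  also have "\<dots> = y" using R_eq[OF ul] s0 by (simp add: u_def fun_eq_iff)
  finally have "R y = v" using R_f[OF vl] by simp
  thus ?thesis using vn mm(3)[OF ul un] s0 by (simp add: s_def mult.commute)
qed

lemma lower_plus:
  assumes "v \<in> l2 Nplus"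
  shows "l2norm v \<le> mm * l2norm (mapply T Nplus v)"
  using Rbound[OF map_in[OF assms]] R_f[OF assms] by simp

lemma lower_fin:
  assumes x0: "\<And>k. k < a \<or> k > a' \<Longrightarrow> x k = 0"
  shows "l2norm x \<le> mm * l2norm (mapply T UNIV x)"
proof -
  obtain c where c: "c + a - int w \<ge> 1" "\<forall>j. a \<le> j \<and> j \<le> a' \<longrightarrow> b (j + c) = b j"
    using words by blast
  note cp = copy[where x=x and c=c and a=a and a'=a', OF x0 c]
  show ?thesis using lower_plus[OF cp(1)] cp(2,3) by simp
qed


lemma inj0:
  assumes xl: "x \<in> l2 UNIV" and Tx: "mapply T UNIV x = (\<lambda>i. 0)"
  shows "x = (\<lambda>i. 0)"
proof (rule ccontr)
  assume "x \<noteq> (\<lambda>i. 0)"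
  then obtain j0 where xj0: "x j0 \<noteq> 0" by auto
  have xs: "(\<lambda>i. (cmod (x i))\<^sup>2) summable_on UNIV" using xl by (simp add: l2_iff)
  define \<delta> where "\<delta> = cmod (x j0)"
  have d0: "\<delta> > 0" using xj0 by (simp add: \<delta>_def)
  define Q where "Q = mm * (4 * w + 2) * ((2 * w + 1) * K)"
  have Q0: "Q \<ge> 0" unfolding Q_def using mm(2) K_nonneg by simp
  define \<epsilon> where "\<epsilon> = \<delta> / (2 * (Q + 1))"
  have e0: "\<epsilon> > 0" using d0 Q0 by (simp add: \<epsilon>_def)
  have Qe: "Q * \<epsilon> < \<delta>"
  proof -
    have "Q * \<epsilon> = \<delta> * (Q / (2 * (Q + 1)))" by (simp add: \<epsilon>_def)
    also have "\<dots> < \<delta> * 1" using d0 Q0 by (intro mult_strict_left_mono) (auto simp: field_simps)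
    finally show ?thesis by simp
  qed
  define E where "E = {j. cmod (x j) \<ge> \<epsilon>}"
  have finE: "finite E"
  proof (rule ccontr)
    assume inf: "\<not> finite E"
    define n where "n = nat \<lceil>(l2norm x)\<^sup>2 / \<epsilon>\<^sup>2\<rceil> + 1"
    obtain F where F: "finite F" "card F = n" "F \<subseteq> E" using infinite_arbitrarily_large[OF inf] by blast
    have "real n * \<epsilon>\<^sup>2 \<le> (\<Sum>i\<in>F. (cmod (x i))\<^sup>2)"
    proof -
      have "(\<Sum>i\<in>F. \<epsilon>\<^sup>2) \<le> (\<Sum>i\<in>F. (cmod (x i))\<^sup>2)"
        using F(3) e0 by (intro sum_mono power_mono) (auto simp: E_def)
      thus ?thesis using F(2) by simp
    qed
    also have "\<dots> \<le> (l2norm x)\<^sup>2" by (rule fin_sum_le_l2[OF xs F(1)])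
    finally have a: "real n * \<epsilon>\<^sup>2 \<le> (l2norm x)\<^sup>2" .
    have "(l2norm x)\<^sup>2 / \<epsilon>\<^sup>2 < real n" unfolding n_def by linarith
    hence "(l2norm x)\<^sup>2 < real n * \<epsilon>\<^sup>2" using e0 by (simp add: divide_less_eq)
    with a show False by simp
  qed
  define n :: int where "n = \<bar>j0\<bar> + 2 * int w + (\<Sum>j\<in>E. \<bar>j\<bar>) + 1"
  have Eb: "\<bar>e\<bar> < n - 2 * int w" if "e \<in> E" for e
  proof -
    have "\<bar>e\<bar> \<le> (\<Sum>j\<in>E. \<bar>j\<bar>)" using finE that by (intro member_le_sum) auto
    thus ?thesis unfolding n_def by simp
  qed
  have small: "cmod (x k) < \<epsilon>" if "\<bar>k\<bar> \<ge> n - 2 * int w" for k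
    using Eb[of k] that by (force simp: E_def)
  define xt where "xt = (\<lambda>j. if \<bar>j\<bar> \<le> n then x j else 0)"
  have xt0: "xt k = 0" if "k < - n \<or> k > n" for k using that by (auto simp: xt_def)
  have xtF: "\<And>i. i \<notin> {- n..n} \<Longrightarrow> xt i = 0" using xt0 by auto
  have xts: "(\<lambda>i. (cmod (xt i))\<^sup>2) summable_on UNIV" using fin_l2(1)[of "{- n..n}" xt] xtF by blast
  have "\<delta> \<le> l2norm xt"
    using coord_le_l2[OF xts, of j0] by (simp add: \<delta>_def xt_def n_def)
  also have "\<dots> \<le> mm * l2norm (mapply T UNIV xt)" by (rule lower_fin[OF xt0])
  finally have d1: "\<delta> \<le> mm * l2norm (mapply T UNIV xt)" .
  define g where "g = mapply T UNIV xt"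
  have g: "g i = (\<Sum>k\<in>{i - int w..i + int w}. T i k * xt k)" for i unfolding g_def by (rule mapply_U)
  define Bd where "Bd = {- (n + int w)..- (n - int w) - 1} \<union> {n - int w + 1..n + int w}"
  have gz: "g i = 0" if "i \<notin> Bd" for i
  proof -
    have "\<bar>i\<bar> \<le> n - int w \<or> \<bar>i\<bar> > n + int w" using that unfolding Bd_def by auto
    thus ?thesis
    proof
      assume a: "\<bar>i\<bar> \<le> n - int w"
      have "g i = (\<Sum>k\<in>{i - int w..i + int w}. T i k * x k)"
        unfolding g by (rule sum.cong) (use a in \<open>auto simp: xt_def\<close>)
      also have "\<dots> = mapply T UNIV x i" by (simp add: mapply_U)
      finally show ?thesis using Tx by simp
    next
      assume a: "\<bar>i\<bar> > n + int w"
      show ?thesis unfolding g by (rule sum.neutral) (use a in \<open>auto simp: xt_def\<close>)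
    qed
  qed
  have gb: "cmod (g i) \<le> (2 * w + 1) * K * \<epsilon>" for i
  proof (cases "i \<in> Bd")
    case False thus ?thesis using gz[OF False] K_nonneg e0 by simp
  next
    case True
    hence iB: "\<bar>i\<bar> > n - int w" unfolding Bd_def by auto
    have "cmod (g i) \<le> (\<Sum>k\<in>{i - int w..i + int w}. cmod (T i k * xt k))" unfolding g by (rule norm_sum)
    also have "\<dots> \<le> (\<Sum>k\<in>{i - int w..i + int w}. K * \<epsilon>)"
    proof (rule sum_mono)
      fix k assume k: "k \<in> {i - int w..i + int w}"
      have "cmod (xt k) \<le> \<epsilon>"
      proof (cases "\<bar>k\<bar> \<le> n")
        case True
        have "\<bar>k\<bar> \<ge> n - 2 * int w" using k iB by auto
        thus ?thesis using small[of k] True by (simp add: xt_def)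
      qed (use e0 in \<open>auto simp: xt_def\<close>)
      thus "cmod (T i k * xt k) \<le> K * \<epsilon>"
        unfolding norm_mult by (intro mult_mono bound) (auto simp: K_nonneg)
    qed
    also have "\<dots> = (2 * w + 1) * K * \<epsilon>" by simp
    finally show ?thesis .
  qed
  have cB: "card Bd \<le> 4 * w + 2"
  proof -
    have "card Bd \<le> card {- (n + int w)..- (n - int w) - 1} + card {n - int w + 1..n + int w}"
      unfolding Bd_def by (rule card_Un_le)
    also have "\<dots> \<le> 4 * w + 2" by simp
    finally show ?thesis .
  qed
  have "l2norm g = sqrt (\<Sum>i\<in>Bd. (cmod (g i))\<^sup>2)"
    by (rule fin_l2(2)) (use gz in \<open>auto simp: Bd_def\<close>)
  also have "\<dots> = L2_set (\<lambda>i. cmod (g i)) Bd" by (simp add: L2_set_def)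
  also have "\<dots> \<le> (\<Sum>i\<in>Bd. cmod (g i))" by (rule L2_set_le_sum) simp
  also have "\<dots> \<le> (\<Sum>i\<in>Bd. (2 * w + 1) * K * \<epsilon>)" by (rule sum_mono) (rule gb)
  also have "\<dots> = card Bd * ((2 * w + 1) * K * \<epsilon>)" by simp
  also have "\<dots> \<le> (4 * w + 2) * ((2 * w + 1) * K * \<epsilon>)"
    using cB K_nonneg e0 by (intro mult_right_mono) (auto simp del: of_nat_add of_nat_mult
        intro!: mult_nonneg_nonneg simp: of_nat_le_iff[symmetric])
  finally have "l2norm g \<le> (4 * w + 2) * ((2 * w + 1) * K * \<epsilon>)" .
  hence "mm * l2norm g \<le> mm * ((4 * w + 2) * ((2 * w + 1) * K * \<epsilon>))"
    using mm(2) by (rule mult_left_mono)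
  also have "\<dots> = Q * \<epsilon>" by (simp add: Q_def)
  finally show False using d1 Qe unfolding g_def by simp
qed


lemma injU: "inj_on (mapply T UNIV) (l2 UNIV)"
proof (rule inj_onI)
  fix x y assume xl: "x \<in> l2 UNIV" and yl: "y \<in> l2 UNIV" and e: "mapply T UNIV x = mapply T UNIV y"
  have "mapply T UNIV (\<lambda>i. x i - y i) = (\<lambda>i. 0)" using e by (simp add: mapply_diff)
  from inj0[OF l2_diff[OF xl yl] this] show "x = y" by (simp add: fun_eq_iff)
qed

lemma surjU:
  assumes yl: "y \<in> l2 UNIV"
  shows "\<exists>x\<in>l2 UNIV. mapply T UNIV x = y \<and> l2norm x \<le> mm * l2norm y"
proof -
  have ys: "(\<lambda>i. (cmod (y i))\<^sup>2) summable_on UNIV" using yl by (simp add: l2_iff)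
  define Y where "Y = l2norm y"
  have Y0: "Y \<ge> 0" by (simp add: Y_def l2norm_nonneg)
  have "\<forall>n::nat. \<exists>c. c + (- int n) - int 0 \<ge> 1 \<and> (\<forall>j. - int n \<le> j \<and> j \<le> int n \<longrightarrow> b (j + c) = b j)"
    using words by blast
  from choice[OF this] obtain cc where cc: "\<And>n. cc n - int n \<ge> 1"
    "\<And>n j. - int n \<le> j \<Longrightarrow> j \<le> int n \<Longrightarrow> b (j + cc n) = b j" by auto
  define yt where "yt n = (\<lambda>i. if - int n \<le> i \<and> i \<le> int n then y i else 0)" for n
  define yn where "yn n = (\<lambda>i. yt n (i - cc n))" for n
  define v where "v n = R (yn n)" for n
  define X where "X n = (\<lambda>j. v n (j + cc n))" for n
  have ynl: "yn n \<in> l2 Nplus" for n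
  proof -
    have z: "\<And>i. i \<notin> {cc n - int n..cc n + int n} \<Longrightarrow> yn n i = 0" by (auto simp: yn_def yt_def)
    have "(\<lambda>i. (cmod (yn n i))\<^sup>2) summable_on UNIV" using fin_l2(1)[of "{cc n - int n..cc n + int n}" "yn n"] z by blast
    moreover have "i \<notin> Nplus \<Longrightarrow> yn n i = 0" for i using cc(1)[of n] by (intro z) (auto simp: Nplus_iff)
    ultimately show ?thesis by (simp add: l2_iff)
  qed
  have ytn: "l2norm (yt n) \<le> Y" for n
  proof -
    have z: "\<And>i. i \<notin> {- int n..int n} \<Longrightarrow> yt n i = 0" by (auto simp: yt_def)
    have "l2norm (yt n) = sqrt (\<Sum>i\<in>{- int n..int n}. (cmod (yt n i))\<^sup>2)" using fin_l2(2)[of "{- int n..int n}" "yt n"] z by blast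
    also have "\<dots> = sqrt (\<Sum>i\<in>{- int n..int n}. (cmod (y i))\<^sup>2)" by (simp add: yt_def)
    also have "\<dots> \<le> sqrt (Y\<^sup>2)" unfolding Y_def by (rule real_sqrt_le_mono[OF fin_sum_le_l2[OF ys]]) simp
    also have "\<dots> = Y" using Y0 by simp
    finally show ?thesis .
  qed
  have ynn: "l2norm (yn n) = l2norm (yt n)" for n
    using l2norm_shift[of "yt n" "- cc n"] by (simp add: yn_def)
  have vl: "v n \<in> l2 Nplus" for n unfolding v_def by (rule R_in[OF ynl])
  have vb: "l2norm (v n) \<le> mm * Y" for n
  proof -
    have "mm * l2norm (yn n) \<le> mm * Y" using ytn[of n] ynn[of n] mm(2) by (simp add: mult_left_mono)
    thus ?thesis using Rbound[OF ynl, of n] unfolding v_def by linarith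
  qed
  have vs: "(\<lambda>i. (cmod (v n i))\<^sup>2) summable_on UNIV" for n using vl[of n] by (simp add: l2_iff)
  have Xs: "(\<lambda>i. (cmod (X n i))\<^sup>2) summable_on UNIV" for n unfolding X_def using summable_shift vs by blast
  have Xn: "l2norm (X n) = l2norm (v n)" for n unfolding X_def by (rule l2norm_shift)
  have Xb: "cmod (X n j) \<le> mm * Y" for n j using coord_le_l2[OF Xs, of n j] Xn vb order_trans by metis
  have Xf: "(\<Sum>j\<in>F. (cmod (X n j))\<^sup>2) \<le> (mm * Y)\<^sup>2" if "finite F" for n F
  proof -
    have "(\<Sum>j\<in>F. (cmod (X n j))\<^sup>2) \<le> (l2norm (X n))\<^sup>2" by (rule fin_sum_le_l2[OF Xs that])
    also have "\<dots> \<le> (mm * Y)\<^sup>2" using Xn vb l2norm_nonneg by (simp add: power_mono)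
    finally show ?thesis .
  qed
  have Xeq: "(\<Sum>k\<in>{i - int w..i + int w}. T i k * X n k) = y i" if iw: "\<bar>i\<bar> + int w \<le> int n" for i n
  proof -
    define r where "r = i + cc n"
    have r1: "r - int w \<ge> 1" using iw cc(1)[of n] by (simp add: r_def)
    have "- int n \<le> i" "i \<le> int n" using iw by auto
    hence "y i = yn n r" by (simp add: yn_def yt_def r_def)
    also have "\<dots> = mapply T Nplus (v n) r" unfolding v_def by (simp add: R_eq[OF ynl])
    also have "\<dots> = (\<Sum>k\<in>{r - int w..r + int w}. T r k * v n k)"
    proof -
      have "{r - int w..r + int w} \<inter> Nplus = {r - int w..r + int w}" using r1 by (auto simp: Nplus_iff)
      thus ?thesis using mapply_band[OF band, of Nplus "v n" r] r1 by (simp add: Nplus_iff)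
    qed
    also have "\<dots> = (\<Sum>k\<in>{i - int w..i + int w}. T r (k + cc n) * v n (k + cc n))"
      by (rule sum.reindex_bij_witness[where i="\<lambda>k. k + cc n" and j="\<lambda>k. k - cc n"]) (auto simp: r_def)
    also have "\<dots> = (\<Sum>k\<in>{i - int w..i + int w}. T i k * X n k)"
    proof (rule sum.cong[OF refl])
      fix k assume "k \<in> {i - int w..i + int w}"
      hence "- int n \<le> k" "k \<le> int n" using iw by auto
      from shiftinv[OF cc(2)[OF this], of i]
      show "T r (k + cc n) * v n (k + cc n) = T i k * X n k" by (simp add: r_def X_def)
    qed
    finally show ?thesis by simp
  qed
  obtain \<phi> x where \<phi>: "strict_mono \<phi>" and conv: "\<And>j. (\<lambda>k. X (\<phi> k) j) \<longlonglongrightarrow> x j"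
    using diag_conv[of X, OF Xb] by blast
  have xf: "(\<Sum>j\<in>F. (cmod (x j))\<^sup>2) \<le> (mm * Y)\<^sup>2" if "finite F" for F
  proof -
    have "(\<lambda>k. \<Sum>j\<in>F. (cmod (X (\<phi> k) j))\<^sup>2) \<longlonglongrightarrow> (\<Sum>j\<in>F. (cmod (x j))\<^sup>2)"
      by (intro tendsto_sum tendsto_power tendsto_norm conv)
    thus ?thesis by (rule LIMSEQ_le_const2) (use Xf that in blast)
  qed
  note bs = bound_summable[OF xf]
  have xl: "x \<in> l2 UNIV" using bs(1) by (simp add: l2_iff)
  have xn: "l2norm x \<le> mm * Y" using bs(2) mm(2) Y0 by (intro power2_le_imp_le[OF bs(2)]) auto
  have eq: "mapply T UNIV x i = y i" for i
  proof -
    have t1: "(\<lambda>k. \<Sum>j\<in>{i - int w..i + int w}. T i j * X (\<phi> k) j) \<longlonglongrightarrow> (\<Sum>j\<in>{i - int w..i + int w}. T i j * x j)"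
      by (intro tendsto_sum tendsto_mult tendsto_const conv)
    have "eventually (\<lambda>k. (\<Sum>j\<in>{i - int w..i + int w}. T i j * X (\<phi> k) j) = y i) sequentially"
    proof (rule eventually_sequentiallyI[of "nat (\<bar>i\<bar> + int w)"])
      fix k assume "nat (\<bar>i\<bar> + int w) \<le> k"
      hence "\<bar>i\<bar> + int w \<le> int (\<phi> k)" using seq_suble[OF \<phi>, of k] by linarith
      thus "(\<Sum>j\<in>{i - int w..i + int w}. T i j * X (\<phi> k) j) = y i" by (rule Xeq)
    qed
    hence t2: "(\<lambda>k. \<Sum>j\<in>{i - int w..i + int w}. T i j * X (\<phi> k) j) \<longlonglongrightarrow> y i" by (rule tendsto_eventually)
    show ?thesis using LIMSEQ_unique[OF t1 t2] by (simp add: mapply_U)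
  qed
  show ?thesis using xl xn eq by (auto simp: Y_def)
qed

lemma main1: "invertible_on T UNIV \<and> inv_norm T UNIV \<le> inv_norm T Nplus"
proof -
  have img: "mapply T UNIV ` l2 UNIV = l2 UNIV"
  proof
    show "mapply T UNIV ` l2 UNIV \<subseteq> l2 UNIV" using bounded_T(1) by blast
    show "l2 UNIV \<subseteq> mapply T UNIV ` l2 UNIV"
    proof
      fix y assume "y \<in> l2 UNIV"
      then obtain x where "x \<in> l2 UNIV" "mapply T UNIV x = y" using surjU by blast
      thus "y \<in> mapply T UNIV ` l2 UNIV" by blast
    qed
  qed
  have bij: "bij_betw (mapply T UNIV) (l2 UNIV) (l2 UNIV)" using injU img by (simp add: bij_betw_def)
  have ib: "l2norm (the_inv_into (l2 UNIV) (mapply T UNIV) y) \<le> mm * l2norm y" if yU: "y \<in> l2 UNIV" for y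
  proof -
    obtain x where x: "x \<in> l2 UNIV" "mapply T UNIV x = y" "l2norm x \<le> mm * l2norm y" using surjU[OF yU] by blast
    have "the_inv_into (l2 UNIV) (mapply T UNIV) y = x" by (rule the_inv_into_f_eq[OF injU x(2) x(1)])
    thus ?thesis using x(3) by simp
  qed
  have bo: "bounded_op T UNIV" unfolding bounded_op_def using bounded_T by blast
  have invU: "invertible_on T UNIV" unfolding invertible_on_def using bo bij ib by blast
  have "inv_norm T UNIV = Sup {ereal (l2norm (the_inv_into (l2 UNIV) (mapply T UNIV) y)) | y. y \<in> l2 UNIV \<and> l2norm y = 1}"
    using invU by (simp add: inv_norm_def)
  also have "\<dots> \<le> ereal mm"
    by (rule Sup_least) (use ib in fastforce)
  finally show ?thesis using invU mm(1) by simp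
qed

end



lemma words_from_sub:
  assumes sw: "subwords UNIV b = subwords Nplus b"
  shows "\<exists>c. c + a - int d \<ge> 1 \<and> (\<forall>j. a \<le> j \<and> j \<le> a' \<longrightarrow> b (j + c) = b j)"
proof -
  define s where "s = a - int d"
  define n where "n = nat (a' - s + 1)"
  have "map (\<lambda>k. b (s + int k)) [0..<n] \<in> subwords UNIV b" unfolding subwords_def by blast
  hence "map (\<lambda>k. b (s + int k)) [0..<n] \<in> subwords Nplus b" using sw by simp
  then obtain p n' where e: "map (\<lambda>k. b (s + int k)) [0..<n] = map (\<lambda>k. b (p + int k)) [0..<n']"
    and pin: "\<forall>k<n'. p + int k \<in> Nplus" unfolding subwords_def by blast
  have nn: "n' = n" using arg_cong[OF e, of length] by simp
  have eqk: "b (p + int k) = b (s + int k)" if "k < n" for k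
    using arg_cong[OF e, of "\<lambda>l. l ! k"] that nn by simp
  show ?thesis
  proof (cases "n = 0")
    case True
    hence "a' < a" unfolding n_def s_def by simp
    thus ?thesis by (intro exI[of _ "1 - a + int d"]) auto
  next
    case False
    hence p1: "p \<ge> 1" using pin nn by (auto simp: Nplus_iff)
    show ?thesis
    proof (intro exI[of _ "p - s"] conjI allI impI)
      show "1 \<le> p - s + a - int d" using p1 by (simp add: s_def)
      fix j assume j: "a \<le> j \<and> j \<le> a'"
      define k where "k = nat (j - s)"
      have k: "k < n" "s + int k = j" using j by (auto simp: k_def n_def s_def)
      have "j + (p - s) = p + int k" using k(2) by linarith
      hence "b (j + (p - s)) = b (p + int k)" by (rule arg_cong[where f=b])
      also have "\<dots> = b j" using eqk[OF k(1)] k(2) by simp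
      finally show "b (j + (p - s)) = b j" .
    qed
  qed
qed

theorem corollary4p7:
  fixes \<Sigma> :: "complex set" and L :: imat and \<gamma> :: int and w :: nat
    and H :: "iseq \<Rightarrow> imat" and b :: iseq
  assumes "\<Sigma> \<noteq> {}" and "compact \<Sigma>"
    and "band_op L" and "mmult L shift = mmult shift L"
    and "\<And>u. H u = madd L (mmult (shift_pow \<gamma>) (mult_op u))"
    and "\<And>u. (\<forall>i. u i \<in> \<Sigma>) \<Longrightarrow> band_width w (H u)"
    and "\<forall>i. b i \<in> \<Sigma>"
    and "subwords UNIV b = subwords Nplus b"
  shows "(\<forall>z. inv_norm (mshift (H b) z) Nplus \<ge> inv_norm (mshift (H b) z) UNIV)
       \<and> spectrum_on (H b) Nplus \<supseteq> spectrum_on (H b) UNIV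
       \<and> (\<forall>z. \<forall>N::nat. N \<ge> 1 \<longrightarrow>
            nu N (mshift (H b) z) Nplus =
              Min ({nu_win w (mshift (H b) z) (int j) (int j + int N - 1) | j. j \<in> {1..w}}
                   \<union> {nu N (mshift (H b) z) UNIV}))"
proof -
  note ne = assms(1) and cpt = assms(2) and comm = assms(4) and Hdef = assms(5)
    and bandH = assms(6)[OF assms(7)] and bS = assms(7) and sw = assms(8)
  obtain Bb where Bb: "\<And>s. s \<in> \<Sigma> \<Longrightarrow> cmod s \<le> Bb"
    using compact_imp_bounded[OF cpt] unfolding bounded_iff by blast
  have Lc: "L i (j + 1) = L (i - 1) j" for i j
  proof -
    have "mmult L shift i j = mmult shift L i j" using comm by simp
    moreover have "mmult L shift i j = L i (j + 1)"
      unfolding mmult_def shift_def by (subst infsum_single_pt[where a="j + 1"]) auto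
    moreover have "mmult shift L i j = L (i - 1) j"
      unfolding mmult_def shift_def by (subst infsum_single_pt[where a="i - 1"]) auto
    ultimately show ?thesis by simp
  qed
  have L1: "L (i + 1) (j + 1) = L i j" for i j using Lc[where i="i + 1" and j=j] by simp
  have Ln: "L (i + int n) (j + int n) = L i j" for i j n
  proof (induction n)
    case (Suc n)
    have "L (i + int (Suc n)) (j + int (Suc n)) = L ((i + int n) + 1) ((j + int n) + 1)" by (simp add: algebra_simps)
    also have "\<dots> = L i j" using L1 Suc by simp
    finally show ?case .
  qed simp
  have Lt: "L (i + c) (j + c) = L i j" for i j c
  proof (cases "c \<ge> 0")
    case True thus ?thesis using Ln[where i=i and j=j and n="nat c"] by simp
  next
    case False
    have "L ((i + c) + int (nat (- c))) ((j + c) + int (nat (- c))) = L (i + c) (j + c)" by (rule Ln)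
    thus ?thesis using False by simp
  qed
  have Hb: "H b i j = L i j + (if j = i - \<gamma> then b j else 0)" for i j
  proof -
    have "mmult (shift_pow \<gamma>) (mult_op b) i j = (if j = i - \<gamma> then b j else 0)"
      unfolding mmult_def shift_pow_def mult_op_def by (subst infsum_single_pt[where a=j]) auto
    thus ?thesis using Hdef by (simp add: madd_def)
  qed
  show ?thesis
  proof -
    have part: "(invertible_on (mshift (H b) z) Nplus \<longrightarrow> invertible_on (mshift (H b) z) UNIV \<and>
        inv_norm (mshift (H b) z) UNIV \<le> inv_norm (mshift (H b) z) Nplus) \<and>
        (\<forall>N::nat. N \<ge> 1 \<longrightarrow> nu N (mshift (H b) z) Nplus =
              Min ({nu_win w (mshift (H b) z) (int j) (int j + int N - 1) | j. j \<in> {1..w}}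
                   \<union> {nu N (mshift (H b) z) UNIV}))" for z
    proof -
      define T where "T = mshift (H b) z"
      define K where "K = (\<Sum>d\<in>{- int w..int w}. cmod (L d 0)) + Bb + cmod z"
      have Td: "T i j = L i j + (if j = i - \<gamma> then b j else 0) - (if i = j then z else 0)" for i j
        by (simp add: T_def mshift_def Hb)
      have bandT: "band_width w T"
        using bandH unfolding band_width_def T_def mshift_def by auto
      have Bb0: "Bb \<ge> 0" using ne Bb norm_ge_zero order_trans by blast
      have K0: "K \<ge> 0" unfolding K_def using Bb0 by (simp add: sum_nonneg)
      have boundT: "cmod (T i j) \<le> K" for i j
      proof (cases "\<bar>i - j\<bar> > int w")
        case True thus ?thesis using bandT K0 by (simp add: band_width_def)
      next
        case False
        have "L i j = L (i - j) 0" using Lt[where i="i - j" and j=0 and c=j] by simp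
        hence "cmod (L i j) \<le> (\<Sum>d\<in>{- int w..int w}. cmod (L d 0))"
          using False by (auto intro!: member_le_sum)
        moreover have "cmod (if j = i - \<gamma> then b j else 0) \<le> Bb" using Bb bS Bb0 by auto
        moreover have "cmod (if i = j then z else 0) \<le> cmod z" by auto
        ultimately show ?thesis unfolding Td K_def
          by (smt (verit) norm_triangle_ineq norm_triangle_ineq4)
      qed
      have shT: "T (i + c) (j + c) = T i j" if "b (j + c) = b j" for i j c
      proof -
        have "L (i + c) (j + c) = L i j" by (rule Lt)
        moreover have "(j + c = i + c - \<gamma>) \<longleftrightarrow> (j = i - \<gamma>)" by auto
        moreover have "(i + c = j + c) \<longleftrightarrow> (i = j)" by auto
        ultimately show ?thesis unfolding Td using that by (simp only:)
      qed
      have st: "setting T b w K"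
        by (unfold_locales) (use bandT boundT shT words_from_sub[OF sw] in auto)
      have p1: "invertible_on T Nplus \<longrightarrow> invertible_on T UNIV \<and> inv_norm T UNIV \<le> inv_norm T Nplus"
      proof
        assume "invertible_on T Nplus"
        hence "inv_setting T b w K" using st by (simp add: inv_setting_def inv_setting_axioms_def)
        thus "invertible_on T UNIV \<and> inv_norm T UNIV \<le> inv_norm T Nplus" by (rule inv_setting.main1)
      qed
      have p3: "\<forall>N::nat. N \<ge> 1 \<longrightarrow> nu N T Nplus =
              Min ({nu_win w T (int j) (int j + int N - 1) | j. j \<in> {1..w}} \<union> {nu N T UNIV})"
        using setting.nu_formula[OF st] by blast
      show ?thesis using p1 p3 unfolding T_def by blast
    qed
    have A: "inv_norm (mshift (H b) z) Nplus \<ge> inv_norm (mshift (H b) z) UNIV" for z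
    proof (cases "invertible_on (mshift (H b) z) Nplus")
      case True thus ?thesis using part[of z] by blast
    next
      case False thus ?thesis by (simp add: inv_norm_def)
    qed
    have B: "spectrum_on (H b) Nplus \<supseteq> spectrum_on (H b) UNIV"
      unfolding spectrum_on_def using part by blast
    show ?thesis using A B part by blast
  qed
qed

end
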